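(* Let $p\ge1$ be an integer, let $N$ be a $p$-rooted almost-binary phylogenetic network on $X$, let $\mathcal{Z}=\{Z_1,\dots,Z_d\}$ be the set of maximal zig-zag trails of $N$ (whose edge-sets partition $E(N)$), and let $\mathcal{X}\in\{\mathcal{A},\mathcal{B},\mathcal{C}\}$. Then: (1) The map $S\mapsto (V(N),S)$ is a one-to-one correspondence between the family of $\mathcal{X}$-admissible subsets $S$ of $E(N)$ and the family $\mathcal{X}_N$ of support networks of $N$. (2) For $S\subseteq E(N)$, the spanning subgraph $(V(N),S)$ belongs to $\mathcal{X}_N$ if and only if $S\cap E(Z_i)$ is an $\mathcal{X}$-admissible subset of $E(Z_i)$ for every $i\in[1,d]$. (3) Identifying support networks with their edge-sets, $\mathcal{X}_N=\prod_{i=1}^d \mathcal{S}_{\mathcal{X}}(Z_i)$ (i.e., $\mathcal{X}_N=\{S_1\cup\dots\cup S_d : S_i\in\mathcal{S}_{\mathcal{X}}(Z_i)\}$), for any ordering $(Z_1,\dots,Z_d)$ of $\mathcal{Z}$. (4) $|\mathcal{X}_N|=\prod_{i=1}^d|\mathcal{S}_{\mathcal{X}}(Z_i)|$.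
   Context: A $p$-rooted almost-binary phylogenetic network on a non-empty finite set $X$ is a finite simple directed acyclic graph $N$ with exactly $p$ vertices of in-degree $0$ and out-degree $1$ or $2$ (roots), whose set of vertices of in-degree $1$ and out-degree $0$ is exactly $X$ (leaves), and every other vertex has in-degree and out-degree in $\{1,2\}$. A zig-zag trail is a connected subgraph $Z$ of $N$ with $m\ge1$ edges admitting an ordering $(e_1,\dots,e_m)$ of $E(Z)$ with $\mathrm{head}(e_i)=\mathrm{head}(e_{i+1})$ or $\mathrm{tail}(e_i)=\mathrm{tail}(e_{i+1})$ for all $i\in[1,m-1]$; it is maximal if not properly contained in another zig-zag trail. A support network of $N$ is a spanning subgraph $G$ of $N$ (i.e., $V(G)=V(N)$) that is itself a $p$-rooted almost-binary phylogenetic network on $X$; it is minimal if no support network of $N$ is a proper subgraph of $G$, and minimum if it has the minimum number of edges among all support networks of $N$. $\mathcal{A}_N,\mathcal{B}_N,\mathcal{C}_N$ denote the families of all, minimal, and minimum support networks of $N$, respectively. For a subgraph $Z$ of $N$, a subset $S\subseteq E(Z)$ is $\mathcal{A}$-admissible if (C1) every edge $(u,v)\in E(Z)$ with $\mathrm{outdeg}_N(u)=1$ or $\mathrm{indeg}_N(v)=1$ lies in $S$, and (C2) for any two distinct edges $e_1,e_2\in E(Z)$ with $\mathrm{tail}(e_1)=\mathrm{tail}(e_2)$ or $\mathrm{head}(e_1)=\mathrm{head}(e_2)$, at least one of $e_1,e_2$ lies in $S$. An $\mathcal{A}$-admissible $S$ is $\mathcal{B}$-admissible if no proper subset of $S$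 is $\mathcal{A}$-admissible, and $\mathcal{C}$-admissible if it has minimum cardinality among all $\mathcal{A}$-admissible subsets of $E(Z)$. $\mathcal{S}_{\mathcal{X}}(Z)$ denotes the family of $\mathcal{X}$-admissible subsets of $E(Z)$. *)

theory Defs
  imports Main
begin

(* A directed graph is given by a vertex set V and an edge set E of pairs (tail, head).
   Simplicity (no multi-edges) is automatic; loops are excluded by acyclicity. *)

definition indeg :: "('v \<times> 'v) set \<Rightarrow> 'v \<Rightarrow> nat" where
  "indeg E v = card {u. (u, v) \<in> E}"

definition outdeg :: "('v \<times> 'v) set \<Rightarrow> 'v \<Rightarrow> nat" where
  "outdeg E u = card {v. (u, v) \<in> E}"

definition is_root :: "('v \<times> 'v) set \<Rightarrow> 'v \<Rightarrow> bool" where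
  "is_root E v \<longleftrightarrow> indeg E v = 0 \<and> outdeg E v \<in> {1, 2}"

definition phylo_net :: "nat \<Rightarrow> 'v set \<Rightarrow> 'v set \<Rightarrow> ('v \<times> 'v) set \<Rightarrow> bool" where
  "phylo_net p X V E \<longleftrightarrow>
     finite V \<and> E \<subseteq> V \<times> V \<and> acyclic E \<and> X \<noteq> {} \<and>
     card {v \<in> V. is_root E v} = p \<and>
     X = {v \<in> V. indeg E v = 1 \<and> outdeg E v = 0} \<and>
     (\<forall>v \<in> V. is_root E v \<or> v \<in> X \<or> (indeg E v \<in> {1, 2} \<and> outdeg E v \<in> {1, 2}))"

definition support_nets :: "nat \<Rightarrow> 'v set \<Rightarrow> 'v set \<Rightarrow> ('v \<times> 'v) set \<Rightarrow> ('v set \<times> ('v \<times> 'v) set) set" where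
  "support_nets p X V E = {(V', E'). V' = V \<and> E' \<subseteq> E \<and> phylo_net p X V' E'}"

definition minimal_support_nets where
  "minimal_support_nets p X V E =
     {G \<in> support_nets p X V E. \<not> (\<exists>H \<in> support_nets p X V E.
          fst H \<subseteq> fst G \<and> snd H \<subseteq> snd G \<and> H \<noteq> G)}"

definition minimum_support_nets where
  "minimum_support_nets p X V E =
     {G \<in> support_nets p X V E. \<forall>H \<in> support_nets p X V E. card (snd G) \<le> card (snd H)}"

datatype family = FamA | FamB | FamC

definition supp_family :: "family \<Rightarrow> nat \<Rightarrow> 'v set \<Rightarrow> 'v set \<Rightarrow> ('v \<times> 'v) set \<Rightarrow> ('v set \<times> ('v \<times> 'v) set) set" where
  "supp_family F p X V E = (case F of
      FamA \<Rightarrow> support_nets p X V E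
    | FamB \<Rightarrow> minimal_support_nets p X V E
    | FamC \<Rightarrow> minimum_support_nets p X V E)"

(* Zig-zag trails. A zig-zag trail is a connected subgraph with at least one edge; being
   connected, its vertex set consists of the endpoints of its edges, so it is determined by
   its edge set Z. *)
definition zigzag :: "('v \<times> 'v) set \<Rightarrow> ('v \<times> 'v) set \<Rightarrow> bool" where
  "zigzag E Z \<longleftrightarrow> Z \<subseteq> E \<and>
     (\<exists>es. es \<noteq> [] \<and> distinct es \<and> set es = Z \<and>
        (\<forall>i. Suc i < length es \<longrightarrow>
           snd (es ! i) = snd (es ! Suc i) \<or> fst (es ! i) = fst (es ! Suc i)))"

definition max_zigzag :: "('v \<times> 'v) set \<Rightarrow> ('v \<times> 'v) set \<Rightarrow> bool" where
  "max_zigzag E Z \<longleftrightarrow> zigzag E Z \<and> \<not> (\<exists>Z'. zigzag E Z' \<and> Z \<subset> Z')"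

definition A_adm :: "('v \<times> 'v) set \<Rightarrow> ('v \<times> 'v) set \<Rightarrow> ('v \<times> 'v) set \<Rightarrow> bool" where
  "A_adm E Z S \<longleftrightarrow> S \<subseteq> Z \<and>
     (\<forall>u v. (u, v) \<in> Z \<and> (outdeg E u = 1 \<or> indeg E v = 1) \<longrightarrow> (u, v) \<in> S) \<and>
     (\<forall>e1 \<in> Z. \<forall>e2 \<in> Z. e1 \<noteq> e2 \<and> (fst e1 = fst e2 \<or> snd e1 = snd e2)
        \<longrightarrow> e1 \<in> S \<or> e2 \<in> S)"

definition B_adm where
  "B_adm E Z S \<longleftrightarrow> A_adm E Z S \<and> \<not> (\<exists>S'. S' \<subset> S \<and> A_adm E Z S')"

definition C_adm where
  "C_adm E Z S \<longleftrightarrow> A_adm E Z S \<and> (\<forall>S'. A_adm E Z S' \<longrightarrow> card S \<le> card S')"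

definition adm :: "family \<Rightarrow> ('v \<times> 'v) set \<Rightarrow> ('v \<times> 'v) set \<Rightarrow> ('v \<times> 'v) set \<Rightarrow> bool" where
  "adm F E Z S = (case F of FamA \<Rightarrow> A_adm E Z S | FamB \<Rightarrow> B_adm E Z S | FamC \<Rightarrow> C_adm E Z S)"

end

theory Submission
  imports Defs "HOL-Library.FuncSet"
begin

definition shr :: "('v \<times> 'v) \<Rightarrow> ('v \<times> 'v) \<Rightarrow> bool" where
  "shr a b \<longleftrightarrow> snd a = snd b \<or> fst a = fst b"

lemma shr_sym: "shr a b \<Longrightarrow> shr b a" unfolding shr_def by auto

lemma zigzag_iff: "zigzag E Z \<longleftrightarrow> Z \<subseteq> E \<and>
   (\<exists>es. es \<noteq> [] \<and> distinct es \<and> set es = Z \<and> successively shr es)"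
  by (simp add: zigzag_def successively_conv_nth shr_def)

locale dg =
  fixes E :: "('v \<times> 'v) set"
  assumes fin: "finite E"
    and outb: "\<And>u. card {v. (u, v) \<in> E} \<le> 2"
    and inb: "\<And>v. card {u. (u, v) \<in> E} \<le> 2"
begin

lemma no3_fst:
  assumes "x \<in> E" "y \<in> E" "z \<in> E" "x \<noteq> y" "x \<noteq> z" "y \<noteq> z" "fst x = fst y" "fst y = fst z"
  shows False
proof -
  define u a b c where "u = fst x" "a = snd x" "b = snd y" "c = snd z"
  have xyz: "x = (u,a)" "y = (u,b)" "z = (u,c)"
    using assms(7,8) unfolding u_a_b_c_def by (auto simp: prod_eq_iff)
  have sub: "{a,b,c} \<subseteq> {v. (u, v) \<in> E}" using assms xyz by auto
  have "{v. (u, v) \<in> E} \<subseteq> snd ` E" by force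
  then have "finite {v. (u, v) \<in> E}" using fin finite_subset by blast
  then have "card {a,b,c} \<le> 2" using card_mono[OF _ sub] outb[of u] by linarith
  moreover have "a \<noteq> b" "a \<noteq> c" "b \<noteq> c" using assms(4-6) xyz by auto
  then have "card {a,b,c} = 3" by simp
  ultimately show False by simp
qed

lemma no3_snd:
  assumes "x \<in> E" "y \<in> E" "z \<in> E" "x \<noteq> y" "x \<noteq> z" "y \<noteq> z" "snd x = snd y" "snd y = snd z"
  shows False
proof -
  define u a b c where "u = snd x" "a = fst x" "b = fst y" "c = fst z"
  have xyz: "x = (a,u)" "y = (b,u)" "z = (c,u)"
    using assms(7,8) unfolding u_a_b_c_def by (auto simp: prod_eq_iff)
  have sub: "{a,b,c} \<subseteq> {v. (v, u) \<in> E}" using assms xyz by auto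
  have "{v. (v, u) \<in> E} \<subseteq> fst ` E" by force
  then have "finite {v. (v, u) \<in> E}" using fin finite_subset by blast
  then have "card {a,b,c} \<le> 2" using card_mono[OF _ sub] inb[of u] by linarith
  moreover have "a \<noteq> b" "a \<noteq> c" "b \<noteq> c" using assms(4-6) xyz by auto
  then have "card {a,b,c} = 3" by simp
  ultimately show False by simp
qed

lemma no3:
  assumes "x \<in> E" "y \<in> E" "e \<in> E" "f \<in> E" "distinct [x,y,e,f]"
    "shr x e" "shr e y" "shr e f"
  shows False
proof -
  have d: "x \<noteq> e" "y \<noteq> e" "f \<noteq> e" "x \<noteq> y" "x \<noteq> f" "y \<noteq> f" using assms(5) by auto
  have "\<not> (fst x = fst e \<and> snd x = snd e)" using d(1) by (simp add: prod_eq_iff)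
  have "\<not> (fst y = fst e \<and> snd y = snd e)" using d(2) by (simp add: prod_eq_iff)
  have "\<not> (fst f = fst e \<and> snd f = snd e)" using d(3) by (simp add: prod_eq_iff)
  have f1: "False" if "fst x = fst e" "fst e = fst f"
    by (rule no3_fst[OF assms(1,3,4) d(1) d(5) not_sym[OF d(3)] that])
  have f2: "False" if "fst y = fst e" "fst e = fst f"
    by (rule no3_fst[OF assms(2,3,4) d(2) d(6) not_sym[OF d(3)] that])
  have f3: "False" if "snd x = snd e" "snd e = snd f"
    by (rule no3_snd[OF assms(1,3,4) d(1) d(5) not_sym[OF d(3)] that])
  have f4: "False" if "snd y = snd e" "snd e = snd f"
    by (rule no3_snd[OF assms(2,3,4) d(2) d(6) not_sym[OF d(3)] that])
  have f5: "False" if "fst x = fst e" "fst e = fst y"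
    by (rule no3_fst[OF assms(1,3,2) d(1) d(4) not_sym[OF d(2)] that])
  have f6: "False" if "snd x = snd e" "snd e = snd y"
    by (rule no3_snd[OF assms(1,3,2) d(1) d(4) not_sym[OF d(2)] that])
  consider "fst e = fst f" | "snd e = snd f" using assms(8) unfolding shr_def by blast
  then show False
  proof cases
    case 1
    have "snd x = snd e" using assms(6) f1 1 unfolding shr_def by metis
    moreover have "snd e = snd y" using assms(7) f2 1 unfolding shr_def by metis
    ultimately show False using f6 by metis
  next
    case 2
    have "fst x = fst e" using assms(6) f3 2 unfolding shr_def by metis
    moreover have "fst e = fst y" using assms(7) f4 2 unfolding shr_def by metis
    ultimately show False using f5 by metis
  qed
qed

lemma zz_ext:
  assumes zz: "zigzag E Z" and e1: "e1 \<in> Z" and e2: "e2 \<in> E" "e2 \<notin> Z" and sh: "shr e1 e2"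
  shows "zigzag E (insert e2 Z)"
proof -
  obtain es where es: "Z \<subseteq> E" "es \<noteq> []" "distinct es" "set es = Z" "successively shr es"
    using zz unfolding zigzag_iff by blast
  obtain i where i: "i < length es" "es ! i = e1" using e1 es(4) by (metis in_set_conv_nth)
  have "i = 0 \<or> i = length es - 1"
  proof (rule ccontr)
    assume "\<not> (i = 0 \<or> i = length es - 1)"
    then have i0: "0 < i" "Suc i < length es" using i by auto
    define x where "x = es ! (i - 1)"
    define y where "y = es ! Suc i"
    have "shr x e1" using successively_nth[OF es(5), of "i - 1"] i0 i unfolding x_def by simp
    have "shr e1 y" using successively_nth[OF es(5), of i] i0 i unfolding y_def by simp
    have xy: "x \<in> Z" "y \<in> Z" using i0 es(4) unfolding x_def y_def by auto
    have "x \<noteq> e1" "y \<noteq> e1" "x \<noteq> y" using i0 i es(3) unfolding x_def y_def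
      by (auto simp: nth_eq_iff_index_eq)
    then have "distinct [x,y,e1,e2]" using xy e1 e2 by auto
    then show False using no3[of x y e1 e2] \<open>shr x e1\<close> \<open>shr e1 y\<close> sh xy e1 e2 es(1) by blast
  qed
  then show ?thesis
  proof
    assume "i = 0"
    then have "hd es = e1" using i es(2) by (simp add: hd_conv_nth)
    then have "successively shr (e2 # es)" using es(5) shr_sym[OF sh] by (simp add: successively_Cons)
    then show ?thesis unfolding zigzag_iff using es e2 by auto
  next
    assume "i = length es - 1"
    then have "last es = e1" using i es(2) by (simp add: last_conv_nth)
    then have "successively shr (es @ [e2])" using es(5) sh by (simp add: successively_append_iff)
    then show ?thesis unfolding zigzag_iff using es e2
      by (intro conjI exI[of _ "es @ [e2]"]) auto
  qed
qed

lemma max_closed: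
  assumes "max_zigzag E Z" "e1 \<in> Z" "e2 \<in> E" "shr e1 e2"
  shows "e2 \<in> Z"
proof (rule ccontr)
  assume "e2 \<notin> Z"
  then have "zigzag E (insert e2 Z)" using zz_ext assms unfolding max_zigzag_def by blast
  moreover have "Z \<subset> insert e2 Z" using \<open>e2 \<notin> Z\<close> by auto
  ultimately show False using assms(1) unfolding max_zigzag_def by blast
qed

lemma max_contains:
  assumes M: "max_zigzag E Z" and e: "e \<in> Z" and zz: "zigzag E Z'" and e': "e \<in> Z'"
  shows "Z' \<subseteq> Z"
proof -
  obtain es where es: "Z' \<subseteq> E" "es \<noteq> []" "distinct es" "set es = Z'" "successively shr es"
    using zz unfolding zigzag_iff by blast
  obtain k where k: "k < length es" "es ! k = e" using e' es(4) by (metis in_set_conv_nth)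
  have up: "k + j < length es \<longrightarrow> es ! (k + j) \<in> Z" for j
  proof (induction j)
    case 0 then show ?case using k e by simp
  next
    case (Suc j)
    show ?case
    proof
      assume a: "k + Suc j < length es"
      have "shr (es ! (k + j)) (es ! Suc (k + j))" using successively_nth[OF es(5)] a by simp
      moreover have "es ! Suc (k + j) \<in> E" using a es by auto
      ultimately show "es ! (k + Suc j) \<in> Z" using max_closed[OF M] Suc a by simp
    qed
  qed
  have down: "j \<le> k \<longrightarrow> es ! (k - j) \<in> Z" for j
  proof (induction j)
    case 0 then show ?case using k e by simp
  next
    case (Suc j)
    show ?case
    proof
      assume a: "Suc j \<le> k"
      have eq: "Suc (k - Suc j) = k - j" using a by simp
      have "shr (es ! (k - Suc j)) (es ! Suc (k - Suc j))"
        using successively_nth[OF es(5), of "k - Suc j"] a k by simp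
      then have "shr (es ! (k - j)) (es ! (k - Suc j))" using eq shr_sym by metis
      moreover have "es ! (k - Suc j) \<in> E" using a es k by auto
      ultimately show "es ! (k - Suc j) \<in> Z" using max_closed[OF M] Suc a by simp
    qed
  qed
  show ?thesis
  proof
    fix x assume "x \<in> Z'"
    then obtain i where i: "i < length es" "es ! i = x" using es(4) by (metis in_set_conv_nth)
    show "x \<in> Z"
    proof (cases "k \<le> i")
      case True then show ?thesis using up[of "i - k"] i by simp
    next
      case False then show ?thesis using down[of "k - i"] i by simp
    qed
  qed
qed

lemma exists_max: "zigzag E Z \<Longrightarrow> \<exists>M. max_zigzag E M \<and> Z \<subseteq> M"
proof (induction "card (E - Z)" arbitrary: Z rule: less_induct)
  case less
  show ?case
  proof (cases "max_zigzag E Z")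
    case True then show ?thesis by blast
  next
    case False
    then obtain Z' where Z': "zigzag E Z'" "Z \<subset> Z'" using less.prems unfolding max_zigzag_def by blast
    have "Z' \<subseteq> E" using Z' unfolding zigzag_def by blast
    then have "card (E - Z') < card (E - Z)" using Z'(2) fin
      by (intro psubset_card_mono) auto
    then show ?thesis using less.hyps Z' by (meson order.trans psubset_imp_subset)
  qed
qed

lemma max_sub: "max_zigzag E Z \<Longrightarrow> Z \<subseteq> E"
  unfolding max_zigzag_def zigzag_def by blast

lemma edge_in_max: "e \<in> E \<Longrightarrow> \<exists>Z. max_zigzag E Z \<and> e \<in> Z"
proof -
  assume "e \<in> E"
  then have "zigzag E {e}" unfolding zigzag_def by (intro conjI exI[of _ "[e]"]) auto
  then show ?thesis using exists_max by blast
qed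

lemma max_disj:
  assumes "max_zigzag E Z1" "max_zigzag E Z2" "Z1 \<noteq> Z2" shows "Z1 \<inter> Z2 = {}"
proof (rule ccontr)
  assume "Z1 \<inter> Z2 \<noteq> {}"
  then obtain e where "e \<in> Z1" "e \<in> Z2" by blast
  have z: "zigzag E Z1" "zigzag E Z2" using assms unfolding max_zigzag_def by auto
  have "Z2 \<subseteq> Z1" by (rule max_contains[OF assms(1) \<open>e \<in> Z1\<close> z(2) \<open>e \<in> Z2\<close>])
  moreover have "Z1 \<subseteq> Z2" by (rule max_contains[OF assms(2) \<open>e \<in> Z2\<close> z(1) \<open>e \<in> Z1\<close>])
  ultimately show False using assms(3) by simp
qed

lemma max_finite: "finite {Z. max_zigzag E Z}"
proof -
  have "{Z. max_zigzag E Z} \<subseteq> Pow E" using max_sub by blast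
  then show ?thesis using fin finite_subset by blast
qed

lemma union_max: "\<Union>{Z. max_zigzag E Z} = E"
proof
  show "\<Union>{Z. max_zigzag E Z} \<subseteq> E" using max_sub by auto
  show "E \<subseteq> \<Union>{Z. max_zigzag E Z}"
  proof
    fix e assume "e \<in> E"
    then obtain Z where "max_zigzag E Z" "e \<in> Z" using edge_in_max by blast
    then show "e \<in> \<Union>{Z. max_zigzag E Z}" by blast
  qed
qed

end

context dg begin

lemma A_restrict:
  assumes A: "A_adm E E S" and ZE: "Z \<subseteq> E"
  shows "A_adm E Z (S \<inter> Z)"
proof -
  have c1: "\<forall>u v. (u, v) \<in> E \<and> (outdeg E u = 1 \<or> indeg E v = 1) \<longrightarrow> (u, v) \<in> S"
    using A unfolding A_adm_def by blast
  have c2: "\<forall>e1 \<in> E. \<forall>e2 \<in> E. e1 \<noteq> e2 \<and> (fst e1 = fst e2 \<or> snd e1 = snd e2) \<longrightarrow> e1 \<in> S \<or> e2 \<in> S"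
    using A unfolding A_adm_def by blast
  show ?thesis unfolding A_adm_def
  proof (intro conjI)
    show "S \<inter> Z \<subseteq> Z" by blast
    show "\<forall>u v. (u, v) \<in> Z \<and> (outdeg E u = 1 \<or> indeg E v = 1) \<longrightarrow> (u, v) \<in> S \<inter> Z"
      using c1 ZE by blast
    show "\<forall>e1 \<in> Z. \<forall>e2 \<in> Z. e1 \<noteq> e2 \<and> (fst e1 = fst e2 \<or> snd e1 = snd e2) \<longrightarrow> e1 \<in> S \<inter> Z \<or> e2 \<in> S \<inter> Z"
    proof (intro ballI impI)
      fix e1 e2 assume "e1 \<in> Z" "e2 \<in> Z" "e1 \<noteq> e2 \<and> (fst e1 = fst e2 \<or> snd e1 = snd e2)"
      then show "e1 \<in> S \<inter> Z \<or> e2 \<in> S \<inter> Z" using c2 ZE by blast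
    qed
  qed
qed

lemma A_local:
  assumes "S \<subseteq> E"
  shows "A_adm E E S \<longleftrightarrow> (\<forall>Z. max_zigzag E Z \<longrightarrow> A_adm E Z (S \<inter> Z))"
proof
  assume A: "A_adm E E S"
  show "\<forall>Z. max_zigzag E Z \<longrightarrow> A_adm E Z (S \<inter> Z)"
  proof (intro allI impI)
    fix Z assume "max_zigzag E Z"
    then have "Z \<subseteq> E" by (rule max_sub)
    then show "A_adm E Z (S \<inter> Z)" using A_restrict[OF A] by blast
  qed
next
  assume L: "\<forall>Z. max_zigzag E Z \<longrightarrow> A_adm E Z (S \<inter> Z)"
  have c1: "(u, v) \<in> S" if h: "(u, v) \<in> E" "outdeg E u = 1 \<or> indeg E v = 1" for u v
  proof -
    obtain Z where "max_zigzag E Z" "(u, v) \<in> Z" using edge_in_max h(1) by blast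
    then show ?thesis using L h(2) unfolding A_adm_def by blast
  qed
  have c2: "e1 \<in> S \<or> e2 \<in> S" if h: "e1 \<in> E" "e2 \<in> E" "e1 \<noteq> e2" "fst e1 = fst e2 \<or> snd e1 = snd e2" for e1 e2
  proof -
    obtain Z where Z: "max_zigzag E Z" "e1 \<in> Z" using edge_in_max h(1) by blast
    have "shr e1 e2" using h(4) unfolding shr_def by blast
    then have "e2 \<in> Z" using max_closed[OF Z h(2)] by blast
    then have "A_adm E Z (S \<inter> Z)" "e1 \<in> Z" using L Z by auto
    then show ?thesis using \<open>e2 \<in> Z\<close> h(3,4) unfolding A_adm_def by blast
  qed
  show "A_adm E E S" unfolding A_adm_def using assms c1 c2 by blast
qed

lemma A_replace:
  assumes A: "A_adm E E S" and Z: "max_zigzag E Z" and T: "A_adm E Z T"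
  shows "A_adm E E ((S - Z) \<union> T)"
proof -
  have SE: "S \<subseteq> E" using A unfolding A_adm_def by blast
  have TZ: "T \<subseteq> Z" using T unfolding A_adm_def by blast
  have ZE: "Z \<subseteq> E" using Z by (rule max_sub)
  have sub: "(S - Z) \<union> T \<subseteq> E" using SE TZ ZE by blast
  have L: "\<forall>Z'. max_zigzag E Z' \<longrightarrow> A_adm E Z' (S \<inter> Z')" using A_local[OF SE] A by blast
  show ?thesis unfolding A_local[OF sub]
  proof (intro allI impI)
    fix Z' assume Z': "max_zigzag E Z'"
    show "A_adm E Z' (((S - Z) \<union> T) \<inter> Z')"
    proof (cases "Z' = Z")
      case True
      then have "((S - Z) \<union> T) \<inter> Z' = T" using TZ by blast
      then show ?thesis using T True by simp
    next
      case False
      then have "Z' \<inter> Z = {}" using max_disj[OF Z' Z] by blast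
      then have "((S - Z) \<union> T) \<inter> Z' = S \<inter> Z'" using TZ by blast
      then show ?thesis using L Z' by simp
    qed
  qed
qed

lemma B_local:
  assumes SE: "S \<subseteq> E"
  shows "B_adm E E S \<longleftrightarrow> (\<forall>Z. max_zigzag E Z \<longrightarrow> B_adm E Z (S \<inter> Z))"
proof
  assume B: "B_adm E E S"
  then have A: "A_adm E E S" unfolding B_adm_def by blast
  show "\<forall>Z. max_zigzag E Z \<longrightarrow> B_adm E Z (S \<inter> Z)"
  proof (intro allI impI)
    fix Z assume Z: "max_zigzag E Z"
    have AZ: "A_adm E Z (S \<inter> Z)" using A_local[OF SE] A Z by blast
    show "B_adm E Z (S \<inter> Z)" unfolding B_adm_def
    proof (intro conjI AZ notI)
      assume "\<exists>S'. S' \<subset> S \<inter> Z \<and> A_adm E Z S'"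
      then obtain T where T: "T \<subset> S \<inter> Z" "A_adm E Z T" by blast
      have "A_adm E E ((S - Z) \<union> T)" by (rule A_replace[OF A Z T(2)])
      moreover have "(S - Z) \<union> T \<subset> S" using T(1) by blast
      ultimately show False using B unfolding B_adm_def by blast
    qed
  qed
next
  assume L: "\<forall>Z. max_zigzag E Z \<longrightarrow> B_adm E Z (S \<inter> Z)"
  then have A: "A_adm E E S" using A_local[OF SE] unfolding B_adm_def by blast
  show "B_adm E E S" unfolding B_adm_def
  proof (intro conjI A notI)
    assume "\<exists>S'. S' \<subset> S \<and> A_adm E E S'"
    then obtain S' where S': "S' \<subset> S" "A_adm E E S'" by blast
    then obtain e where e: "e \<in> S" "e \<notin> S'" by blast
    obtain Z where Z: "max_zigzag E Z" "e \<in> Z" using edge_in_max e(1) SE by blast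
    have S'E: "S' \<subseteq> E" using S' SE by blast
    have "A_adm E Z (S' \<inter> Z)" using A_local[OF S'E] S'(2) Z(1) by blast
    moreover have "S' \<inter> Z \<subset> S \<inter> Z" using S'(1) e Z(2) by blast
    ultimately show False using L Z(1) unfolding B_adm_def by blast
  qed
qed

lemma card_decomp:
  assumes "S \<subseteq> E"
  shows "card S = (\<Sum>Z\<in>{Z. max_zigzag E Z}. card (S \<inter> Z))"
proof -
  have "(\<Union>Z\<in>{Z. max_zigzag E Z}. S \<inter> Z) = S \<inter> \<Union>{Z. max_zigzag E Z}" by blast
  then have "S = (\<Union>Z\<in>{Z. max_zigzag E Z}. S \<inter> Z)" using union_max assms by (simp add: Int_absorb2)
  moreover have "card (\<Union>Z\<in>{Z. max_zigzag E Z}. S \<inter> Z) = (\<Sum>Z\<in>{Z. max_zigzag E Z}. card (S \<inter> Z))"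
  proof (rule card_UN_disjoint)
    show "finite {Z. max_zigzag E Z}" by (rule max_finite)
    have "finite S" using assms fin by (rule finite_subset)
    then show "\<forall>i\<in>{Z. max_zigzag E Z}. finite (S \<inter> i)" by simp
    show "\<forall>i\<in>{Z. max_zigzag E Z}. \<forall>j\<in>{Z. max_zigzag E Z}. i \<noteq> j \<longrightarrow> S \<inter> i \<inter> (S \<inter> j) = {}"
    proof (intro ballI impI)
      fix i j assume "i \<in> {Z. max_zigzag E Z}" "j \<in> {Z. max_zigzag E Z}" "i \<noteq> j"
      then have "i \<inter> j = {}" using max_disj by simp
      then show "S \<inter> i \<inter> (S \<inter> j) = {}" by blast
    qed
  qed
  ultimately show ?thesis by simp
qed

lemma C_local:
  assumes SE: "S \<subseteq> E"
  shows "C_adm E E S \<longleftrightarrow> (\<forall>Z. max_zigzag E Z \<longrightarrow> C_adm E Z (S \<inter> Z))"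
proof
  assume C: "C_adm E E S"
  then have A: "A_adm E E S" unfolding C_adm_def by blast
  show "\<forall>Z. max_zigzag E Z \<longrightarrow> C_adm E Z (S \<inter> Z)"
  proof (intro allI impI)
    fix Z assume Z: "max_zigzag E Z"
    have AZ: "A_adm E Z (S \<inter> Z)" using A_local[OF SE] A Z by blast
    show "C_adm E Z (S \<inter> Z)" unfolding C_adm_def
    proof (intro conjI AZ allI impI)
      fix T assume T: "A_adm E Z T"
      show "card (S \<inter> Z) \<le> card T"
      proof (rule ccontr)
        assume lt: "\<not> card (S \<inter> Z) \<le> card T"
        have TZ: "T \<subseteq> Z" using T unfolding A_adm_def by blast
        have ZE: "Z \<subseteq> E" using Z by (rule max_sub)
        have fS: "finite S" using SE fin by (rule finite_subset)
        have "T \<subseteq> E" using TZ ZE by blast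
        then have fT: "finite T" using fin by (rule finite_subset)
        have "card ((S - Z) \<union> T) = card (S - Z) + card T"
          using TZ fS fT by (intro card_Un_disjoint) auto
        moreover have "card S = card (S - Z) + card (S \<inter> Z)"
        proof -
          have "S = (S - Z) \<union> (S \<inter> Z)" by blast
          then have "card S = card ((S - Z) \<union> (S \<inter> Z))" by simp
          also have "\<dots> = card (S - Z) + card (S \<inter> Z)" using fS by (intro card_Un_disjoint) auto
          finally show ?thesis .
        qed
        ultimately have lt2: "card ((S - Z) \<union> T) < card S" using lt by simp
        have "A_adm E E ((S - Z) \<union> T)" by (rule A_replace[OF A Z T])
        then have "card S \<le> card ((S - Z) \<union> T)" using C unfolding C_adm_def by blast
        then show False using lt2 by simp
      qed
    qed
  qed
next
  assume L: "\<forall>Z. max_zigzag E Z \<longrightarrow> C_adm E Z (S \<inter> Z)"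
  then have A: "A_adm E E S" using A_local[OF SE] unfolding C_adm_def by blast
  show "C_adm E E S" unfolding C_adm_def
  proof (intro conjI A allI impI)
    fix S' assume S': "A_adm E E S'"
    have S'E: "S' \<subseteq> E" using S' unfolding A_adm_def by blast
    have "card S = (\<Sum>Z\<in>{Z. max_zigzag E Z}. card (S \<inter> Z))" by (rule card_decomp[OF SE])
    also have "\<dots> \<le> (\<Sum>Z\<in>{Z. max_zigzag E Z}. card (S' \<inter> Z))"
    proof (rule sum_mono)
      fix Z assume "Z \<in> {Z. max_zigzag E Z}"
      then have Z: "max_zigzag E Z" by simp
      have "A_adm E Z (S' \<inter> Z)" using A_local[OF S'E] S' Z by blast
      then show "card (S \<inter> Z) \<le> card (S' \<inter> Z)" using L Z unfolding C_adm_def by blast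
    qed
    also have "\<dots> = card S'" by (rule card_decomp[OF S'E, symmetric])
    finally show "card S \<le> card S'" .
  qed
qed

lemma adm_local:
  assumes "S \<subseteq> E"
  shows "adm F E E S \<longleftrightarrow> (\<forall>Z. max_zigzag E Z \<longrightarrow> adm F E Z (S \<inter> Z))"
  using A_local[OF assms] B_local[OF assms] C_local[OF assms] unfolding adm_def
  by (cases F) auto

end

lemma nb_fin_out: "E \<subseteq> V \<times> V \<Longrightarrow> finite V \<Longrightarrow> finite {v. (u, v) \<in> E}"
  by (rule finite_subset[of _ V]) auto

lemma nb_fin_in: "E \<subseteq> V \<times> V \<Longrightarrow> finite V \<Longrightarrow> finite {u. (u, v) \<in> E}"
  by (rule finite_subset[of _ V]) auto

lemma od_pos: "finite {v. (u, v) \<in> S} \<Longrightarrow> 1 \<le> outdeg S u \<longleftrightarrow> (\<exists>v. (u, v) \<in> S)"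
  unfolding outdeg_def by (auto simp: card_gt_0_iff Suc_le_eq)

lemma id_pos: "finite {u. (u, v) \<in> S} \<Longrightarrow> 1 \<le> indeg S v \<longleftrightarrow> (\<exists>u. (u, v) \<in> S)"
  unfolding indeg_def by (auto simp: card_gt_0_iff Suc_le_eq)

lemma pn_basic:
  assumes "phylo_net p X V E"
  shows "finite V" "E \<subseteq> V \<times> V" "acyclic E" "X \<noteq> {}" "card {v \<in> V. is_root E v} = p"
    "X = {v \<in> V. indeg E v = 1 \<and> outdeg E v = 0}"
    "\<And>v. v \<in> V \<Longrightarrow> is_root E v \<or> v \<in> X \<or> (indeg E v \<in> {1, 2} \<and> outdeg E v \<in> {1, 2})"
  using assms unfolding phylo_net_def by blast+

lemma pn_deg:
  assumes N: "phylo_net p X V E"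
  shows "outdeg E u \<le> 2" "indeg E u \<le> 2"
proof -
  note b = pn_basic[OF N]
  have "outdeg E u \<le> 2 \<and> indeg E u \<le> 2"
  proof (cases "u \<in> V")
    case True
    from b(7)[OF True] show ?thesis
      using b(6) unfolding is_root_def by auto
  next
    case False
    then have "{v. (u, v) \<in> E} = {}" "{v. (v, u) \<in> E} = {}" using b(2) by auto
    then show ?thesis unfolding outdeg_def indeg_def by simp
  qed
  then show "outdeg E u \<le> 2" "indeg E u \<le> 2" by auto
qed

lemma pn_dg: assumes N: "phylo_net p X V E" shows "dg E"
proof
  note b = pn_basic[OF N]
  show "finite E" using b(1,2) finite_subset by blast
  show "card {v. (u, v) \<in> E} \<le> 2" for u using pn_deg[OF N] unfolding outdeg_def by blast
  show "card {u. (u, v) \<in> E} \<le> 2" for v using pn_deg[OF N] unfolding indeg_def by blast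
qed

lemma deg_mono:
  assumes N: "phylo_net p X V E" and SE: "S \<subseteq> E"
  shows "outdeg S u \<le> outdeg E u" "indeg S u \<le> indeg E u"
proof -
  note b = pn_basic[OF N]
  show "outdeg S u \<le> outdeg E u" unfolding outdeg_def
    by (rule card_mono[OF nb_fin_out[OF b(2,1)]]) (use SE in auto)
  show "indeg S u \<le> indeg E u" unfolding indeg_def
    by (rule card_mono[OF nb_fin_in[OF b(2,1)]]) (use SE in auto)
qed

lemma A_imp_pn:
  assumes N: "phylo_net p X V E" and A: "A_adm E E S"
  shows "phylo_net p X V S"
proof -
  note b = pn_basic[OF N]
  interpret dg E by (rule pn_dg[OF N])
  have SE: "S \<subseteq> E" using A unfolding A_adm_def by blast
  have SV: "S \<subseteq> V \<times> V" using SE b(2) by blast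
  have c1: "\<And>u v. (u, v) \<in> E \<Longrightarrow> outdeg E u = 1 \<or> indeg E v = 1 \<Longrightarrow> (u, v) \<in> S"
    using A unfolding A_adm_def by blast
  have c2: "\<And>e1 e2. e1 \<in> E \<Longrightarrow> e2 \<in> E \<Longrightarrow> e1 \<noteq> e2 \<Longrightarrow> fst e1 = fst e2 \<or> snd e1 = snd e2 \<Longrightarrow> e1 \<in> S \<or> e2 \<in> S"
    using A unfolding A_adm_def by blast
  have F2: "1 \<le> outdeg S u" if h: "1 \<le> outdeg E u" for u
  proof -
    have fE: "finite {v. (u, v) \<in> E}" by (rule nb_fin_out[OF b(2,1)])
    have fS: "finite {v. (u, v) \<in> S}" by (rule nb_fin_out[OF SV b(1)])
    obtain v where v: "(u, v) \<in> E" using od_pos[OF fE] h by blast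
    show ?thesis
    proof (cases "(u, v) \<in> S")
      case True then show ?thesis using od_pos[OF fS] by blast
    next
      case False
      then have "outdeg E u \<noteq> 1" using c1 v by blast
      then have "\<not> {w. (u, w) \<in> E} \<subseteq> {v}"
        using h card_mono[of "{v}" "{w. (u, w) \<in> E}"] unfolding outdeg_def by auto
      then obtain w where w: "(u, w) \<in> E" "w \<noteq> v" by blast
      then have "(u, w) \<in> S" using c2[of "(u, v)" "(u, w)"] v False by auto
      then show ?thesis using od_pos[OF fS] by blast
    qed
  qed
  have F3: "1 \<le> indeg S u" if h: "1 \<le> indeg E u" for u
  proof -
    have fE: "finite {v. (v, u) \<in> E}" by (rule nb_fin_in[OF b(2,1)])
    have fS: "finite {v. (v, u) \<in> S}" by (rule nb_fin_in[OF SV b(1)])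
    obtain v where v: "(v, u) \<in> E" using id_pos[OF fE] h by blast
    show ?thesis
    proof (cases "(v, u) \<in> S")
      case True then show ?thesis using id_pos[OF fS] by blast
    next
      case False
      then have "indeg E u \<noteq> 1" using c1 v by blast
      then have "\<not> {w. (w, u) \<in> E} \<subseteq> {v}"
        using h card_mono[of "{v}" "{w. (w, u) \<in> E}"] unfolding indeg_def by auto
      then obtain w where w: "(w, u) \<in> E" "w \<noteq> v" by blast
      then have "(w, u) \<in> S" using c2[of "(v, u)" "(w, u)"] v False by auto
      then show ?thesis using id_pos[OF fS] by blast
    qed
  qed
  have D: "outdeg S u \<le> outdeg E u" "indeg S u \<le> indeg E u" "outdeg E u \<le> 2" "indeg E u \<le> 2"
    "1 \<le> outdeg E u \<Longrightarrow> 1 \<le> outdeg S u" "1 \<le> indeg E u \<Longrightarrow> 1 \<le> indeg S u" for u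
    using deg_mono[OF N SE] pn_deg[OF N] F2 F3 by auto
  have R: "is_root S u \<longleftrightarrow> is_root E u" for u
  proof -
    have i: "indeg S u = 0 \<longleftrightarrow> indeg E u = 0"
      using D(2,6)[of u] by (cases "indeg E u = 0") auto
    have o: "outdeg S u \<in> {1,2} \<longleftrightarrow> outdeg E u \<in> {1,2}"
      using D(1,3,5)[of u] by (cases "outdeg E u = 0") auto
    show ?thesis unfolding is_root_def using i o by blast
  qed
  have X: "X = {v \<in> V. indeg S v = 1 \<and> outdeg S v = 0}"
  proof
    show "X \<subseteq> {v \<in> V. indeg S v = 1 \<and> outdeg S v = 0}"
    proof
      fix v assume "v \<in> X"
      then have "v \<in> V" "indeg E v = 1" "outdeg E v = 0" using b(6) by auto
      then show "v \<in> {v \<in> V. indeg S v = 1 \<and> outdeg S v = 0}" using D[of v] by auto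
    qed
    show "{v \<in> V. indeg S v = 1 \<and> outdeg S v = 0} \<subseteq> X"
    proof
      fix v assume "v \<in> {v \<in> V. indeg S v = 1 \<and> outdeg S v = 0}"
      then have v: "v \<in> V" "indeg S v = 1" "outdeg S v = 0" by auto
      then have "outdeg E v = 0" using D(5)[of v] by (cases "outdeg E v = 0") auto
      then show "v \<in> X" using b(7)[OF v(1)] unfolding is_root_def by auto
    qed
  qed
  show ?thesis unfolding phylo_net_def
  proof (intro conjI ballI)
    show "finite V" by (rule b(1))
    show "S \<subseteq> V \<times> V" by (rule SV)
    show "acyclic S" using b(3) SE acyclic_subset by blast
    show "X \<noteq> {}" by (rule b(4))
    show "card {v \<in> V. is_root S v} = p" using b(5) R by simp
    show "X = {v \<in> V. indeg S v = 1 \<and> outdeg S v = 0}" by (rule X)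
    fix v assume v: "v \<in> V"
    show "is_root S v \<or> v \<in> X \<or> (indeg S v \<in> {1, 2} \<and> outdeg S v \<in> {1, 2})"
    proof -
      have i: "indeg E v \<in> {1, 2} \<Longrightarrow> indeg S v \<in> {1, 2}"
        using D(2,4,6)[of v] by auto
      have o: "outdeg E v \<in> {1, 2} \<Longrightarrow> outdeg S v \<in> {1, 2}"
        using D(1,3,5)[of v] by auto
      show ?thesis using b(7)[OF v] R[of v] i o by blast
    qed
  qed
qed

lemma pn_imp_A:
  assumes N: "phylo_net p X V E" and SE: "S \<subseteq> E" and NS: "phylo_net p X V S"
  shows "A_adm E E S"
proof -
  note b = pn_basic[OF N]
  note bs = pn_basic[OF NS]
  interpret dg E by (rule pn_dg[OF N])
  have SV: "S \<subseteq> V \<times> V" using SE b(2) by blast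
  have G1: "\<exists>w. (u, w) \<in> S" if h: "(u, v) \<in> E" for u v
  proof (rule ccontr)
    assume "\<not> (\<exists>w. (u, w) \<in> S)"
    then have "outdeg S u = 0" unfolding outdeg_def by simp
    moreover have u: "u \<in> V" using h b(2) by blast
    moreover have "outdeg E u \<noteq> 0"
      using h nb_fin_out[OF b(2,1), of u] unfolding outdeg_def by auto
    ultimately show False using bs(7)[OF u] b(6) unfolding is_root_def by auto
  qed
  have RS: "{v \<in> V. is_root E v} = {v \<in> V. is_root S v}"
  proof (rule card_subset_eq)
    show "finite {v \<in> V. is_root S v}" using b(1) by simp
    show "{v \<in> V. is_root E v} \<subseteq> {v \<in> V. is_root S v}"
    proof
      fix w assume "w \<in> {v \<in> V. is_root E v}"
      then have w: "w \<in> V" "indeg E w = 0" unfolding is_root_def by auto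
      then have "indeg S w = 0" using deg_mono[OF N SE, of w] by simp
      then show "w \<in> {v \<in> V. is_root S v}" using bs(7)[OF w(1)] bs(6) w(1) by auto
    qed
    show "card {v \<in> V. is_root E v} = card {v \<in> V. is_root S v}" using b(5) bs(5) by simp
  qed
  have G2: "\<exists>w. (w, v) \<in> S" if h: "(u, v) \<in> E" for u v
  proof (rule ccontr)
    assume "\<not> (\<exists>w. (w, v) \<in> S)"
    then have i0: "indeg S v = 0" unfolding indeg_def by simp
    have v: "v \<in> V" using h b(2) by blast
    have "indeg E v \<noteq> 0"
      using h nb_fin_in[OF b(2,1), of v] unfolding indeg_def by auto
    moreover have "is_root S v" using bs(7)[OF v] bs(6) i0 v by auto
    then have "v \<in> {v \<in> V. is_root E v}" using RS v by blast
    ultimately show False unfolding is_root_def by auto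
  qed
  show ?thesis unfolding A_adm_def
  proof (intro conjI allI impI ballI)
    show "S \<subseteq> E" by (rule SE)
  next
    fix u v assume h: "(u, v) \<in> E \<and> (outdeg E u = 1 \<or> indeg E v = 1)"
    then consider "outdeg E u = 1" | "indeg E v = 1" by blast
    then show "(u, v) \<in> S"
    proof cases
      case 1
      obtain w where w: "(u, w) \<in> S" using G1 h by blast
      have "card {x. (u, x) \<in> E} = 1" using 1 unfolding outdeg_def .
      then obtain y where y: "{x. (u, x) \<in> E} = {y}" by (auto simp: card_Suc_eq)
      have "(u, w) \<in> E" using w SE by blast
      then have "w \<in> {x. (u, x) \<in> E}" "v \<in> {x. (u, x) \<in> E}" using h by auto
      then have "w = v" using y by auto
      then show ?thesis using w by simp
    next
      case 2
      obtain w where w: "(w, v) \<in> S" using G2 h by blast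
      have "card {x. (x, v) \<in> E} = 1" using 2 unfolding indeg_def .
      then obtain y where y: "{x. (x, v) \<in> E} = {y}" by (auto simp: card_Suc_eq)
      have "(w, v) \<in> E" using w SE by blast
      then have "w \<in> {x. (x, v) \<in> E}" "u \<in> {x. (x, v) \<in> E}" using h by auto
      then have "w = u" using y by auto
      then show ?thesis using w by simp
    qed
  next
    fix e1 e2 assume e: "e1 \<in> E" "e2 \<in> E" and h: "e1 \<noteq> e2 \<and> (fst e1 = fst e2 \<or> snd e1 = snd e2)"
    show "e1 \<in> S \<or> e2 \<in> S"
    proof (rule ccontr)
      assume ns: "\<not> (e1 \<in> S \<or> e2 \<in> S)"
      from h consider "fst e1 = fst e2" | "snd e1 = snd e2" by blast
      then show False
      proof cases
        case 1
        obtain w where w: "(fst e1, w) \<in> S" using G1[of "fst e1" "snd e1"] e(1) by auto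
        have "(fst e1, w) \<in> E" using w SE by blast
        moreover have "e1 \<noteq> (fst e1, w)" "e2 \<noteq> (fst e1, w)" using w ns by auto
        moreover have "fst e2 = fst (fst e1, w)" using 1 by simp
        moreover have "e1 \<noteq> e2" using h by blast
        ultimately show False using no3_fst[OF e(1,2), of "(fst e1, w)"] 1 by blast
      next
        case 2
        obtain w where w: "(w, snd e1) \<in> S" using G2[of "fst e1" "snd e1"] e(1) by auto
        have "(w, snd e1) \<in> E" using w SE by blast
        moreover have "e1 \<noteq> (w, snd e1)" "e2 \<noteq> (w, snd e1)" using w ns by auto
        moreover have "snd e2 = snd (w, snd e1)" using 2 by simp
        moreover have "e1 \<noteq> e2" using h by blast
        ultimately show False using no3_snd[OF e(1,2), of "(w, snd e1)"] 2 by blast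
      qed
    qed
  qed
qed

lemma pn_iff_A:
  assumes N: "phylo_net p X V E" and SE: "S \<subseteq> E"
  shows "phylo_net p X V S \<longleftrightarrow> A_adm E E S"
  using A_imp_pn[OF N] pn_imp_A[OF N SE] by blast

lemma adm_A: "adm F E Z S \<Longrightarrow> A_adm E Z S"
  unfolding adm_def B_adm_def C_adm_def by (cases F) auto

lemma adm_sub: "adm F E Z S \<Longrightarrow> S \<subseteq> Z"
  using adm_A unfolding A_adm_def by blast

lemma supp_A_iff:
  assumes N: "phylo_net p X V E"
  shows "G \<in> support_nets p X V E \<longleftrightarrow> fst G = V \<and> A_adm E E (snd G)"
proof
  assume "G \<in> support_nets p X V E"
  then have "fst G = V" "snd G \<subseteq> E" "phylo_net p X V (snd G)" unfolding support_nets_def by auto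
  then show "fst G = V \<and> A_adm E E (snd G)" using pn_iff_A[OF N] by blast
next
  assume h: "fst G = V \<and> A_adm E E (snd G)"
  then have "snd G \<subseteq> E" unfolding A_adm_def by blast
  then have "phylo_net p X V (snd G)" using pn_iff_A[OF N] h by blast
  then show "G \<in> support_nets p X V E" using h \<open>snd G \<subseteq> E\<close> unfolding support_nets_def
    by (cases G) auto
qed

lemma supp_iff:
  assumes N: "phylo_net p X V E"
  shows "G \<in> supp_family F p X V E \<longleftrightarrow> fst G = V \<and> adm F E E (snd G)"
proof (cases F)
  case FamA
  then show ?thesis using supp_A_iff[OF N] unfolding supp_family_def adm_def by simp
next
  case FamB
  have "G \<in> minimal_support_nets p X V E \<longleftrightarrow> fst G = V \<and> B_adm E E (snd G)"
  proof
    assume h: "G \<in> minimal_support_nets p X V E"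
    then have g: "fst G = V" "A_adm E E (snd G)"
      using supp_A_iff[OF N] unfolding minimal_support_nets_def by auto
    have "\<not> (\<exists>S'. S' \<subset> snd G \<and> A_adm E E S')"
    proof
      assume "\<exists>S'. S' \<subset> snd G \<and> A_adm E E S'"
      then obtain S' where S': "S' \<subset> snd G" "A_adm E E S'" by blast
      have "(V, S') \<in> support_nets p X V E" using supp_A_iff[OF N] S' by simp
      moreover have "(V, S') \<noteq> G" using S' by auto
      ultimately show False using h g S' unfolding minimal_support_nets_def by auto
    qed
    then show "fst G = V \<and> B_adm E E (snd G)" using g unfolding B_adm_def by blast
  next
    assume h: "fst G = V \<and> B_adm E E (snd G)"
    then have G: "G \<in> support_nets p X V E" using supp_A_iff[OF N] unfolding B_adm_def by blast
    have "\<not> (\<exists>H \<in> support_nets p X V E. fst H \<subseteq> fst G \<and> snd H \<subseteq> snd G \<and> H \<noteq> G)"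
    proof
      assume "\<exists>H \<in> support_nets p X V E. fst H \<subseteq> fst G \<and> snd H \<subseteq> snd G \<and> H \<noteq> G"
      then obtain H where H: "H \<in> support_nets p X V E" "snd H \<subseteq> snd G" "H \<noteq> G" by blast
      have "fst H = V" "A_adm E E (snd H)" using H(1) supp_A_iff[OF N] by auto
      then have "snd H \<noteq> snd G" using H(3) h by (metis prod.expand)
      then have "snd H \<subset> snd G" using H(2) by blast
      then show False using h \<open>A_adm E E (snd H)\<close> unfolding B_adm_def by blast
    qed
    then show "G \<in> minimal_support_nets p X V E" using G unfolding minimal_support_nets_def by blast
  qed
  then show ?thesis using FamB unfolding supp_family_def adm_def by simp
next
  case FamC
  have "G \<in> minimum_support_nets p X V E \<longleftrightarrow> fst G = V \<and> C_adm E E (snd G)"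
  proof
    assume h: "G \<in> minimum_support_nets p X V E"
    then have g: "fst G = V" "A_adm E E (snd G)"
      using supp_A_iff[OF N] unfolding minimum_support_nets_def by auto
    have "card (snd G) \<le> card S'" if "A_adm E E S'" for S'
    proof -
      have "(V, S') \<in> support_nets p X V E" using supp_A_iff[OF N] that by simp
      then show ?thesis using h unfolding minimum_support_nets_def by fastforce
    qed
    then show "fst G = V \<and> C_adm E E (snd G)" using g unfolding C_adm_def by blast
  next
    assume h: "fst G = V \<and> C_adm E E (snd G)"
    then have G: "G \<in> support_nets p X V E" using supp_A_iff[OF N] unfolding C_adm_def by blast
    have "card (snd G) \<le> card (snd H)" if "H \<in> support_nets p X V E" for H
    proof -
      have "A_adm E E (snd H)" using that supp_A_iff[OF N] by auto
      then show ?thesis using h unfolding C_adm_def by blast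
    qed
    then show "G \<in> minimum_support_nets p X V E" using G unfolding minimum_support_nets_def by blast
  qed
  then show ?thesis using FamC unfolding supp_family_def adm_def by simp
qed

lemma union_inter:
  assumes dgE: "dg E" and sub: "\<forall>i<length Zs. Ss i \<subseteq> Zs ! i" and d: "distinct Zs"
    and M: "set Zs \<subseteq> {Z. max_zigzag E Z}" and j: "j < length Zs"
  shows "(\<Union>i<length Zs. Ss i) \<inter> Zs ! j = Ss j"
proof -
  interpret dg E by (rule dgE)
  have "Ss i \<inter> Zs ! j = {}" if i: "i < length Zs" "i \<noteq> j" for i
  proof -
    have "Zs ! i \<noteq> Zs ! j" using d i j by (simp add: nth_eq_iff_index_eq)
    moreover have "max_zigzag E (Zs ! i)" "max_zigzag E (Zs ! j)" using M i j nth_mem by blast+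
    ultimately have "Zs ! i \<inter> Zs ! j = {}" using max_disj by blast
    then show ?thesis using sub i by blast
  qed
  then show ?thesis using sub j by blast
qed

theorem theorem4p2:
  fixes p :: nat and X V :: "'v set" and E :: "('v \<times> 'v) set" and F :: family
  assumes "p \<ge> 1"
    and "phylo_net p X V E"
  shows
    "bij_betw (\<lambda>S. (V, S)) {S. adm F E E S} (supp_family F p X V E)
     \<and> (\<forall>S \<subseteq> E. (V, S) \<in> supp_family F p X V E \<longleftrightarrow>
           (\<forall>Z. max_zigzag E Z \<longrightarrow> adm F E Z (S \<inter> Z)))
     \<and> (\<forall>Zs. distinct Zs \<and> set Zs = {Z. max_zigzag E Z} \<longrightarrow>
           {S. (V, S) \<in> supp_family F p X V E} =
             {(\<Union>i<length Zs. Ss i) | Ss. \<forall>i<length Zs. adm F E (Zs ! i) (Ss i)}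
         \<and> card (supp_family F p X V E) =
             (\<Prod>i<length Zs. card {S. adm F E (Zs ! i) S}))"
proof -
  note N = assms(2)
  have dgE: "dg E" by (rule pn_dg[OF N])
  interpret dg E by (rule dgE)
  have si: "(V, S) \<in> supp_family F p X V E \<longleftrightarrow> adm F E E S" for S
    using supp_iff[OF N, of "(V, S)"] by simp
  have admE: "adm F E E S \<Longrightarrow> S \<subseteq> E" for S using adm_sub by blast
  have P1: "bij_betw (\<lambda>S. (V, S)) {S. adm F E E S} (supp_family F p X V E)"
  proof (rule bij_betwI')
    show "\<And>x y. x \<in> {S. adm F E E S} \<Longrightarrow> y \<in> {S. adm F E E S} \<Longrightarrow> ((V, x) = (V, y)) = (x = y)" by simp
    show "\<And>x. x \<in> {S. adm F E E S} \<Longrightarrow> (V, x) \<in> supp_family F p X V E" using si by simp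
    fix G assume "G \<in> supp_family F p X V E"
    then have "fst G = V" "adm F E E (snd G)" using supp_iff[OF N] by auto
    then show "\<exists>x\<in>{S. adm F E E S}. G = (V, x)" by (intro bexI[of _ "snd G"]) (auto simp: prod_eq_iff)
  qed
  have P2: "\<forall>S \<subseteq> E. (V, S) \<in> supp_family F p X V E \<longleftrightarrow>
           (\<forall>Z. max_zigzag E Z \<longrightarrow> adm F E Z (S \<inter> Z))"
    using si adm_local by blast
  have P3: "{S. (V, S) \<in> supp_family F p X V E} =
             {(\<Union>i<length Zs. Ss i) | Ss. \<forall>i<length Zs. adm F E (Zs ! i) (Ss i)}
         \<and> card (supp_family F p X V E) =
             (\<Prod>i<length Zs. card {S. adm F E (Zs ! i) S})"
    if Zs: "distinct Zs" "set Zs = {Z. max_zigzag E Z}" for Zs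
  proof -
    define n where "n = length Zs"
    define U where "U = (\<lambda>Ss. (\<Union>i<n. Ss i :: ('v \<times> 'v) set))"
    have un: "U Ss \<inter> Zs ! j = Ss j" if "\<forall>i<n. adm F E (Zs ! i) (Ss i)" "j < n" for Ss j
      using union_inter[OF dgE _ Zs(1) _, of Ss j] that adm_sub Zs(2) unfolding U_def n_def by blast
    have eq: "{S. adm F E E S} = {U Ss | Ss. \<forall>i<n. adm F E (Zs ! i) (Ss i)}"
    proof
      show "{S. adm F E E S} \<subseteq> {U Ss | Ss. \<forall>i<n. adm F E (Zs ! i) (Ss i)}"
      proof
        fix S assume "S \<in> {S. adm F E E S}"
        then have S: "adm F E E S" "S \<subseteq> E" using admE by auto
        have L: "\<forall>Z. max_zigzag E Z \<longrightarrow> adm F E Z (S \<inter> Z)" using adm_local[OF S(2)] S(1) by blast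
        have "U (\<lambda>i. S \<inter> Zs ! i) = S \<inter> (\<Union>i<n. Zs ! i)" unfolding U_def by blast
        also have "(\<Union>i<n. Zs ! i) = \<Union>(set Zs)" unfolding n_def set_conv_nth by blast
        also have "\<dots> = E" using Zs(2) union_max by simp
        finally have "U (\<lambda>i. S \<inter> Zs ! i) = S" using S(2) by blast
        moreover have "\<forall>i<n. adm F E (Zs ! i) (S \<inter> Zs ! i)"
          using L Zs(2) nth_mem unfolding n_def by blast
        ultimately show "S \<in> {U Ss | Ss. \<forall>i<n. adm F E (Zs ! i) (Ss i)}" by force
      qed
      show "{U Ss | Ss. \<forall>i<n. adm F E (Zs ! i) (Ss i)} \<subseteq> {S. adm F E E S}"
      proof
        fix S assume "S \<in> {U Ss | Ss. \<forall>i<n. adm F E (Zs ! i) (Ss i)}"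
        then obtain Ss where S: "S = U Ss" "\<forall>i<n. adm F E (Zs ! i) (Ss i)" by blast
        have "Ss i \<subseteq> E" if "i < n" for i
          using adm_sub S(2) that max_sub Zs(2) nth_mem unfolding n_def by blast
        then have SE: "S \<subseteq> E" unfolding S(1) U_def by blast
        have "adm F E Z (S \<inter> Z)" if Z: "max_zigzag E Z" for Z
        proof -
          obtain j where j: "j < n" "Z = Zs ! j" using Z Zs(2) unfolding n_def
            by (metis in_set_conv_nth mem_Collect_eq)
          then show ?thesis using un[OF S(2) j(1)] S by simp
        qed
        then show "S \<in> {S. adm F E E S}" using adm_local[OF SE] by blast
      qed
    qed
    have part3: "{S. (V, S) \<in> supp_family F p X V E} =
             {(\<Union>i<length Zs. Ss i) | Ss. \<forall>i<length Zs. adm F E (Zs ! i) (Ss i)}"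
      using eq si unfolding U_def n_def by simp
    define P where "P = (\<Pi>\<^sub>E i\<in>{..<n}. {S. adm F E (Zs ! i) S})"
    have imgP: "U ` P = {U Ss | Ss. \<forall>i<n. adm F E (Zs ! i) (Ss i)}"
    proof
      show "U ` P \<subseteq> {U Ss | Ss. \<forall>i<n. adm F E (Zs ! i) (Ss i)}" unfolding P_def by auto
      show "{U Ss | Ss. \<forall>i<n. adm F E (Zs ! i) (Ss i)} \<subseteq> U ` P"
      proof
        fix S assume "S \<in> {U Ss | Ss. \<forall>i<n. adm F E (Zs ! i) (Ss i)}"
        then obtain Ss where S: "S = U Ss" "\<forall>i<n. adm F E (Zs ! i) (Ss i)" by blast
        have "restrict Ss {..<n} \<in> P" unfolding P_def using S(2) by auto
        moreover have "U (restrict Ss {..<n}) = S" unfolding S(1) U_def by auto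
        ultimately show "S \<in> U ` P" by (metis image_eqI)
      qed
    qed
    have inj: "inj_on U P"
    proof
      fix Ss Ts assume h: "Ss \<in> P" "Ts \<in> P" "U Ss = U Ts"
      have a: "\<forall>i<n. adm F E (Zs ! i) (Ss i)" "\<forall>i<n. adm F E (Zs ! i) (Ts i)"
        using h(1,2) unfolding P_def by auto
      show "Ss = Ts"
      proof (rule PiE_ext[OF h(1)[unfolded P_def] h(2)[unfolded P_def]])
        fix i assume "i \<in> {..<n}"
        then have "i < n" by simp
        then show "Ss i = Ts i" using un[OF a(1)] un[OF a(2)] h(3) by metis
      qed
    qed
    have "card (supp_family F p X V E) = card {S. adm F E E S}"
      using bij_betw_same_card[OF P1] by simp
    also have "\<dots> = card (U ` P)" using eq imgP by simp
    also have "\<dots> = card P" using card_image[OF inj] .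
    also have "\<dots> = (\<Prod>i<n. card {S. adm F E (Zs ! i) S})" unfolding P_def by (simp add: card_PiE)
    finally show ?thesis using part3 unfolding n_def by simp
  qed
  have P3': "\<forall>Zs. distinct Zs \<and> set Zs = {Z. max_zigzag E Z} \<longrightarrow>
           {S. (V, S) \<in> supp_family F p X V E} =
             {(\<Union>i<length Zs. Ss i) | Ss. \<forall>i<length Zs. adm F E (Zs ! i) (Ss i)}
         \<and> card (supp_family F p X V E) =
             (\<Prod>i<length Zs. card {S. adm F E (Zs ! i) S})"
  proof (intro allI impI)
    fix Zs :: "('v \<times> 'v) set list"
    assume h: "distinct Zs \<and> set Zs = {Z. max_zigzag E Z}"
    show "{S. (V, S) \<in> supp_family F p X V E} =
             {(\<Union>i<length Zs. Ss i) | Ss. \<forall>i<length Zs. adm F E (Zs ! i) (Ss i)}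
         \<and> card (supp_family F p X V E) =
             (\<Prod>i<length Zs. card {S. adm F E (Zs ! i) S})"
      by (rule P3[OF conjunct1[OF h] conjunct2[OF h]])
  qed
  show ?thesis by (rule conjI[OF P1 conjI[OF P2 P3']])
qed

end
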